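(* In the idealized setting described in the context, the PAIR framework uses at most $O(\lvert\mathcal S\rvert^2\log D)$ samples (rolled-out trajectories) to learn a policy $\pi$ such that $s\xrightarrow{\pi}g$ for every state $s$ and every goal $g$ reachable from $s$ (i.e. with $d(s,g)<\infty$).
   Context: Setting: a goal-conditioned Markov decision process with finite state space $\mathcal S$, finite action set $\mathcal A$, deterministic transitions, goal space $\mathcal G=\mathcal S$, and sparse reward $r(s,a,g)=\mathbb I\{s=g\}$. A policy is $\pi(a|s,g)$. Write $s\xrightarrow{\pi} g$ if, starting at $s_0=s$ and choosing $a_i\sim\pi(\cdot|s_i,g)$, $s_{i+1}\sim P(\cdot|s_i,a_i)$, the goal $g$ is reached with probability $1$. Let $d(s,s')$ be the minimum $t$ such that some policy reaches $s_t=s'$ from $s_0=s$ with probability $1$ ($+\infty$ if none), and $D=\max\{d(s,s'):d(s,s')<\infty\}$. Assumptions: the initial policy satisfies: if $P(s'|s,a)=1$ then $\pi^{(0)}(a|s,g=s')=1$. In each iteration every state-goal pair $(s,g)\in\mathcal S\times\mathcal S$ is sampled at least once and only a constant number of times. Idealized PAIR iteration $k$: for each pair $(s,g)$, roll out $\pi^{(k-1)}$ from $s$ toward $g$; if it succeeds the trajectory is added to the dataset; otherwise task reduction selects a subgoal $s'$ maximizing $V(s,s')\cdot V(s',g)$, where $V$ is the goal-conditioned value function (equal to $1$ exactly on pairs $(x,y)$ with $x\xrightarrow{\pi^{(k-1)}}y$), executes $\pi^{(k-1)}(\cdot|\cdot,s')$ from $s$ and then $\pi^{(k-1)}(\cdot|\cdot,g)$,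 and adds the resulting successful trajectory from $s$ to $g$ if any. The supervised learning step then produces $\pi^{(k)}$ with $s\xrightarrow{\pi^{(k)}}g$ for every pair $(s,g)$ for which the dataset contains a successful trajectory from $s$ to $g$. *)

theory Defs
  imports "HOL-Probability.Probability"
begin

text \<open>Deterministic goal-conditioned MDP: transition function step :: state => action => state.
  A (goal-conditioned, stochastic) policy is pol :: state => goal => action pmf, goals = states.\<close>

fun hit_prob :: "('s \<Rightarrow> 'a \<Rightarrow> 's) \<Rightarrow> ('s \<Rightarrow> 's \<Rightarrow> 'a pmf) \<Rightarrow> 's \<Rightarrow> nat \<Rightarrow> 's \<Rightarrow> real" where
  "hit_prob step pol g 0 s = (if s = g then 1 else 0)"
| "hit_prob step pol g (Suc t) s =
     (if s = g then 1 else measure_pmf.expectation (pol s g) (\<lambda>a. hit_prob step pol g t (step s a)))"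

text \<open>s --pol--> g : the goal g is reached with probability 1 (probability of ever hitting g
  is the limit of the probabilities of hitting it by time t).\<close>
definition reaches :: "('s \<Rightarrow> 'a \<Rightarrow> 's) \<Rightarrow> ('s \<Rightarrow> 's \<Rightarrow> 'a pmf) \<Rightarrow> 's \<Rightarrow> 's \<Rightarrow> bool" where
  "reaches step pol s g \<longleftrightarrow> ((\<lambda>t. hit_prob step pol g t s) \<longlonglongrightarrow> 1)"

fun state_dist :: "('s \<Rightarrow> 'a \<Rightarrow> 's) \<Rightarrow> ('s \<Rightarrow> 's \<Rightarrow> 'a pmf) \<Rightarrow> 's \<Rightarrow> nat \<Rightarrow> 's \<Rightarrow> 's pmf" where
  "state_dist step pol g 0 s = return_pmf s"
| "state_dist step pol g (Suc t) s =
     bind_pmf (state_dist step pol g t s) (\<lambda>x. map_pmf (step x) (pol x g))"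

definition dist :: "('s \<Rightarrow> 'a \<Rightarrow> 's) \<Rightarrow> 's \<Rightarrow> 's \<Rightarrow> enat" where
  "dist step s s' =
     (if \<exists>t pol. pmf (state_dist step pol s' t s) s' = 1
      then enat (LEAST t. \<exists>pol. pmf (state_dist step pol s' t s) s' = 1)
      else \<infinity>)"

definition diam :: "('s \<Rightarrow> 'a \<Rightarrow> 's) \<Rightarrow> nat" where
  "diam step = Max {m. \<exists>s s'. dist step s s' = enat m}"

end

theory Submission imports Defs begin

fun walk :: "('s \<Rightarrow> 'a \<Rightarrow> 's) \<Rightarrow> 's \<Rightarrow> nat \<Rightarrow> 's \<Rightarrow> bool" where
  "walk step s 0 y = (y = s)"
| "walk step s (Suc t) y = (\<exists>x a. walk step s t x \<and> y = step x a)"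

lemma walk_add: "walk step s (a + b) y \<longleftrightarrow> (\<exists>m. walk step s a m \<and> walk step m b y)"
  by (induction b arbitrary: y) auto

lemma state_dist_walk: "x \<in> set_pmf (state_dist step pol g t s) \<Longrightarrow> walk step s t x"
  by (induction t arbitrary: x) auto

lemma hit_goal: "hit_prob step pol g t g = 1"
  by (cases t) auto

lemma reaches_refl: "reaches step pol g g"
  unfolding reaches_def hit_goal by simp

lemma reaches_one:
  assumes "\<And>b. b \<in> set_pmf (pol s g) \<Longrightarrow> step s b = g"
  shows "reaches step pol s g"
proof -
  have "hit_prob step pol g (Suc t) s = 1" for t
  proof (cases "s = g")
    case False
    have "measure_pmf.expectation (pol s g) (\<lambda>a. hit_prob step pol g t (step s a))
        = measure_pmf.expectation (pol s g) (\<lambda>a. 1)"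
      by (rule integral_cong_AE) (auto simp: AE_measure_pmf_iff assms hit_goal)
    then show ?thesis using False by simp
  qed simp
  hence "(\<lambda>t. hit_prob step pol g (Suc t) s) \<longlonglongrightarrow> 1" by simp
  thus ?thesis unfolding reaches_def by (rule LIMSEQ_imp_Suc)
qed

theorem lemmaA2:
  fixes step :: "'s::finite \<Rightarrow> 'a::finite \<Rightarrow> 's"
    and pol :: "nat \<Rightarrow> 's \<Rightarrow> 's \<Rightarrow> 'a pmf"
    and V :: "nat \<Rightarrow> 's \<Rightarrow> 's \<Rightarrow> real"
    and sub :: "nat \<Rightarrow> 's \<Rightarrow> 's \<Rightarrow> 's"
    and data :: "nat \<Rightarrow> ('s \<times> 's) set"
    and n :: "nat \<Rightarrow> 's \<Rightarrow> 's \<Rightarrow> nat"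
    and c :: nat
  assumes init: "\<And>s a b. b \<in> set_pmf (pol 0 s (step s a)) \<Longrightarrow> step s b = step s a"
    and V_range: "\<And>k x y. k \<ge> 1 \<Longrightarrow> 0 \<le> V k x y \<and> V k x y \<le> 1"
    and V_one: "\<And>k x y. k \<ge> 1 \<Longrightarrow> (V k x y = 1 \<longleftrightarrow> reaches step (pol (k - 1)) x y)"
    and sub_max: "\<And>k s g s'. k \<ge> 1 \<Longrightarrow> \<not> reaches step (pol (k - 1)) s g \<Longrightarrow>
                    V k s s' * V k s' g \<le> V k s (sub k s g) * V k (sub k s g) g"
    and data_direct: "\<And>k s g. k \<ge> 1 \<Longrightarrow> reaches step (pol (k - 1)) s g \<Longrightarrow> (s, g) \<in> data k"
    and data_reduce: "\<And>k s g. k \<ge> 1 \<Longrightarrow> \<not> reaches step (pol (k - 1)) s g \<Longrightarrow>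
                    reaches step (pol (k - 1)) s (sub k s g) \<Longrightarrow>
                    reaches step (pol (k - 1)) (sub k s g) g \<Longrightarrow> (s, g) \<in> data k"
    and learn: "\<And>k s g. k \<ge> 1 \<Longrightarrow> (s, g) \<in> data k \<Longrightarrow> reaches step (pol k) s g"
    and samples: "\<And>k s g. k \<ge> 1 \<Longrightarrow> 1 \<le> n k s g \<and> n k s g \<le> c"
  shows "\<exists>K. (\<forall>s g. dist step s g \<noteq> \<infinity> \<longrightarrow> reaches step (pol K) s g) \<and>
             real (\<Sum>k\<in>{1..K}. \<Sum>p\<in>(UNIV :: ('s \<times> 's) set). 2 * n k (fst p) (snd p))
               \<le> 4 * real c * real (CARD('s))^2 * log 2 (real (diam step))"
  
proof -
  have main: "walk step s t g \<Longrightarrow> t \<le> 2 ^ k \<Longrightarrow> reaches step (pol k) s g" for k s g t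
  proof (induction k arbitrary: s g t)
    case 0
    then have "t = 0 \<or> t = 1" by auto
    then show ?case
    proof
      assume "t = 0" then show ?thesis using 0 reaches_refl by (metis walk.simps(1))
    next
      assume "t = 1"
      then obtain a where ga: "g = step s a" using 0 by auto
      show ?thesis using init ga by (intro reaches_one) auto
    qed
  next
    case (Suc j)
    define t1 where "t1 = min t (2 ^ j)"
    have tt: "t = t1 + (t - t1)" "t - t1 \<le> 2 ^ j" "t1 \<le> 2 ^ j" using Suc.prems by (auto simp: t1_def)
    then obtain m where m: "walk step s t1 m" "walk step m (t - t1) g"
      using Suc.prems(1) walk_add by metis
    have r1: "reaches step (pol j) s m" using Suc.IH m tt by blast
    have r2: "reaches step (pol j) m g" using Suc.IH m tt by blast
    have "(s, g) \<in> data (Suc j)"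
    proof (cases "reaches step (pol j) s g")
      case True then show ?thesis using data_direct[of "Suc j"] by simp
    next
      case False
      let ?u = "sub (Suc j) s g"
      have v1: "V (Suc j) s m = 1" "V (Suc j) m g = 1" using V_one[of "Suc j"] r1 r2 by auto
      have "1 \<le> V (Suc j) s ?u * V (Suc j) ?u g"
        using sub_max[of "Suc j" s g m] False v1 by simp
      moreover have "0 \<le> V (Suc j) s ?u" "V (Suc j) s ?u \<le> 1" "0 \<le> V (Suc j) ?u g" "V (Suc j) ?u g \<le> 1"
        using V_range[of "Suc j"] by auto
      ultimately have "V (Suc j) s ?u = 1" "V (Suc j) ?u g = 1"
        by (smt (verit) mult_le_one mult_right_le_one_le mult_left_le_one_le)+
      then show ?thesis using V_one[of "Suc j"] data_reduce[of "Suc j" s g] False by auto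
    qed
    then show ?case using learn[of "Suc j"] by simp
  qed
  define D where "D = diam step"
  have fin: "finite {m. \<exists>s s'. dist step s s' = enat m}"
  proof (rule finite_subset)
    show "{m. \<exists>s s'. dist step s s' = enat m} \<subseteq> (\<lambda>p. the_enat (dist step (fst p) (snd p))) ` UNIV"
      by (auto simp: image_iff) (metis the_enat.simps fst_conv snd_conv)
  qed simp
  have walkD: "walk step s (the_enat (dist step s g)) g \<and> the_enat (dist step s g) \<le> D"
    if fin_d: "dist step s g \<noteq> \<infinity>" for s g
  proof -
    obtain t where t: "dist step s g = enat t" using fin_d by (cases "dist step s g") auto
    have "t \<in> {m. \<exists>s s'. dist step s s' = enat m}" using t by blast
    hence "t \<le> D" unfolding D_def diam_def using fin by (rule Max_ge[rotated])
    have ex: "\<exists>t pol. pmf (state_dist step pol g t s) g = 1"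
    proof (rule ccontr)
      assume "\<not> ?thesis"
      hence "dist step s g = \<infinity>" unfolding dist_def by (simp only: if_False)
      with t show False by simp
    qed
    have "dist step s g = enat (LEAST t. \<exists>pol. pmf (state_dist step pol g t s) g = 1)"
      unfolding dist_def using ex by (simp only: if_True)
    hence "t = (LEAST t. \<exists>pol. pmf (state_dist step pol g t s) g = 1)" using t by simp
    hence "\<exists>pol. pmf (state_dist step pol g t s) g = 1" using LeastI_ex[OF ex] by simp
    then obtain p where "pmf (state_dist step p g t s) g = 1" by blast
    hence "g \<in> set_pmf (state_dist step p g t s)" by (simp add: set_pmf_iff)
    hence "walk step s t g" by (rule state_dist_walk)
    thus ?thesis using t \<open>t \<le> D\<close> by simp
  qed
  define K where "K = (if D \<le> 1 then 0 else nat \<lceil>log 2 (real D)\<rceil>)"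
  have DK: "D \<le> 2 ^ K"
  proof (cases "D \<le> 1")
    case False
    hence "real D = 2 powr log 2 (real D)" by simp
    also have "\<dots> \<le> 2 powr real K" unfolding K_def using False by (intro powr_mono) auto
    also have "\<dots> = 2 ^ K" by (simp add: powr_realpow)
    finally show ?thesis by (metis of_nat_le_iff of_nat_numeral of_nat_power)
  qed (simp add: K_def)
  have Kb: "real K \<le> 2 * log 2 (real D)"
  proof (cases "D \<le> 1")
    case False
    hence l1: "1 \<le> log 2 (real D)" by simp
    have "real K = \<lceil>log 2 (real D)\<rceil>" unfolding K_def using False l1 by simp
    also have "\<dots> \<le> log 2 (real D) + 1" by linarith
    finally show ?thesis using l1 by simp
  next
    case True
    hence "D = 0 \<or> D = 1" by auto
    thus ?thesis using True by (auto simp: K_def log_def)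
  qed
  have sumb: "(\<Sum>k\<in>{1..K}. \<Sum>p\<in>(UNIV :: ('s \<times> 's) set). 2 * n k (fst p) (snd p))
      \<le> (\<Sum>k\<in>{1..K}. \<Sum>p\<in>(UNIV :: ('s \<times> 's) set). 2 * c)"
    by (intro sum_mono) (use samples in auto)
  also have "\<dots> = K * (CARD('s) ^ 2 * (2 * c))"
  proof -
    have "(UNIV :: ('s \<times> 's) set) = UNIV \<times> UNIV" by simp
    hence "card (UNIV :: ('s \<times> 's) set) = CARD('s) * CARD('s)"
      by (metis card_cartesian_product)
    thus ?thesis by (simp add: power2_eq_square)
  qed
  finally have natb: "(\<Sum>k\<in>{1..K}. \<Sum>p\<in>(UNIV :: ('s \<times> 's) set). 2 * n k (fst p) (snd p))
      \<le> K * (CARD('s) ^ 2 * (2 * c))" .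
  have "real (\<Sum>k\<in>{1..K}. \<Sum>p\<in>(UNIV :: ('s \<times> 's) set). 2 * n k (fst p) (snd p))
      \<le> real (K * (CARD('s) ^ 2 * (2 * c)))" using natb by (simp only: of_nat_le_iff)
  also have "\<dots> = real K * (real (CARD('s)) ^ 2 * (2 * real c))" by simp
  also have "\<dots> \<le> 2 * log 2 (real D) * (real (CARD('s)) ^ 2 * (2 * real c))"
    by (intro mult_right_mono Kb) auto
  finally have bound: "real (\<Sum>k\<in>{1..K}. \<Sum>p\<in>(UNIV :: ('s \<times> 's) set). 2 * n k (fst p) (snd p))
      \<le> 4 * real c * real (CARD('s))^2 * log 2 (real (diam step))"
    by (simp add: D_def algebra_simps)
  show ?thesis
  proof (intro exI conjI allI impI)
    fix s g assume "dist step s g \<noteq> \<infinity>"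
    with walkD[OF this] DK show "reaches step (pol K) s g"
      using main by (meson order_trans)
  qed (rule bound)
qed

end
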